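(* Let $\mathcal{X}$ be a probability distribution over a set of queries (the set is also denoted $\mathcal{X}$), let $k \geq 1$, and let $\hat q_1,\dots,\hat q_k,\hat c_1,\dots,\hat c_k : \mathcal{X} \to \mathbb{R}$ be integrable functions (quality and cost estimates of $k$ models). Let $B \in \mathbb{R}$ and assume there is at least one routing strategy $s$ with $C(s) \leqslant B$. Assume moreover that the set $\Lambda$ is finite. Then: (i) if some routing strategy $s \in S_0$ satisfies $C(s) \leqslant B$, then $s$ maximizes $Q$ over all routing strategies $s'$ with $C(s') \leqslant B$; (ii) otherwise, there exists $\lambda^* \in \mathbb{R}^+$ such that $S_{\lambda^*}$ contains a routing strategy with cost exactly $B$, and every routing strategy $s \in \bigcup_{\lambda \in \mathbb{R}^+} S_\lambda$ with $C(s) = B$ maximizes $Q$ over all routing strategies $s'$ with $C(s') \leqslant B$ (in particular all such strategies achieve the same optimal quality).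
   Context: A routing strategy is a measurable function $s : \mathcal{X} \to \mathbb{R}^k$ with $s_i(x) \geq 0$ for all $i$ and $\sum_{i=1}^k s_i(x) = 1$ for all $x \in \mathcal{X}$ ($s_i(x)$ is the probability of sending query $x$ to model $i$). Its expected quality is $Q(s) = \mathbb{E}_{x \sim \mathcal{X}}\left[\sum_{i=1}^k s_i(x)\hat q_i(x)\right]$ and its expected cost is $C(s) = \mathbb{E}_{x \sim \mathcal{X}}\left[\sum_{i=1}^k s_i(x)\hat c_i(x)\right]$. For $\lambda \in \mathbb{R}^+$ (nonnegative reals), $S_\lambda$ denotes the set of routing strategies $s$ such that for all $x \in \mathcal{X}$ and all $i \in \{1,\dots,k\}$: if $\hat q_i(x) - \lambda \hat c_i(x) < \max_j \left(\hat q_j(x) - \lambda \hat c_j(x)\right)$ then $s_i(x) = 0$. $\Lambda$ denotes the set of $\lambda \in \mathbb{R}$ for which there exist $x \in \mathcal{X}$ and $i \neq j$ with $\hat q_i(x) - \lambda \hat c_i(x) = \hat q_j(x) - \lambda \hat c_j(x)$. *)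

theory Defs
  imports "HOL-Probability.Probability"
begin

text \<open>Models are indexed by 0..<k. A routing strategy is given componentwise:
  s i x is the probability of sending query x to model i.\<close>

definition routing :: "'a measure \<Rightarrow> nat \<Rightarrow> (nat \<Rightarrow> 'a \<Rightarrow> real) \<Rightarrow> bool" where
  "routing M k s \<longleftrightarrow> (\<forall>i<k. s i \<in> borel_measurable M) \<and>
     (\<forall>x\<in>space M. (\<forall>i<k. 0 \<le> s i x) \<and> (\<Sum>i<k. s i x) = 1)"

definition expQ :: "'a measure \<Rightarrow> nat \<Rightarrow> (nat \<Rightarrow> 'a \<Rightarrow> real) \<Rightarrow> (nat \<Rightarrow> 'a \<Rightarrow> real) \<Rightarrow> real" where
  "expQ M k q s = (\<integral>x. (\<Sum>i<k. s i x * q i x) \<partial>M)"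

definition expC :: "'a measure \<Rightarrow> nat \<Rightarrow> (nat \<Rightarrow> 'a \<Rightarrow> real) \<Rightarrow> (nat \<Rightarrow> 'a \<Rightarrow> real) \<Rightarrow> real" where
  "expC M k c s = (\<integral>x. (\<Sum>i<k. s i x * c i x) \<partial>M)"

definition S_lam :: "'a measure \<Rightarrow> nat \<Rightarrow> (nat \<Rightarrow> 'a \<Rightarrow> real) \<Rightarrow> (nat \<Rightarrow> 'a \<Rightarrow> real)
    \<Rightarrow> real \<Rightarrow> (nat \<Rightarrow> 'a \<Rightarrow> real) set" where
  "S_lam M k q c l = {s. routing M k s \<and>
     (\<forall>x\<in>space M. \<forall>i<k. q i x - l * c i x < Max ((\<lambda>j. q j x - l * c j x) ` {..<k}) \<longrightarrow> s i x = 0)}"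

definition Lam :: "'a measure \<Rightarrow> nat \<Rightarrow> (nat \<Rightarrow> 'a \<Rightarrow> real) \<Rightarrow> (nat \<Rightarrow> 'a \<Rightarrow> real) \<Rightarrow> real set" where
  "Lam M k q c = {l. \<exists>x\<in>space M. \<exists>i<k. \<exists>j<k. i \<noteq> j \<and> q i x - l * c i x = q j x - l * c j x}"

end

theory Submission
  imports Defs
begin

lemma routing_le1:
  assumes "routing M k s" "x \<in> space M" "i < k"
  shows "0 \<le> s i x" "s i x \<le> 1"
proof -
  have nn: "\<forall>j<k. 0 \<le> s j x" and su: "(\<Sum>j<k. s j x) = 1" using assms unfolding routing_def by auto
  show "0 \<le> s i x" using nn assms by auto
  have "s i x \<le> (\<Sum>j<k. s j x)"
    by (rule member_le_sum) (use nn assms in auto)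
  then show "s i x \<le> 1" using su by simp
qed

lemma integrable_route1:
  assumes "routing M k s" "integrable M f" "i < k"
  shows "integrable M (\<lambda>x. s i x * f x)"
proof (rule Bochner_Integration.integrable_bound[OF assms(2)])
  have "s i \<in> borel_measurable M" using assms unfolding routing_def by auto
  then show "(\<lambda>x. s i x * f x) \<in> borel_measurable M" using assms(2) by measurable
  show "AE x in M. norm (s i x * f x) \<le> norm (f x)"
  proof (rule AE_I2)
    fix x assume "x \<in> space M"
    from routing_le1[OF assms(1) this assms(3)] show "norm (s i x * f x) \<le> norm (f x)"
      by (simp add: abs_mult mult_left_le_one_le)
  qed
qed

lemma integrable_route:
  assumes "routing M k s" "\<forall>i<k. integrable M (f i)"
  shows "integrable M (\<lambda>x. \<Sum>i<k. s i x * f i x)"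
  using assms by (auto intro!: Bochner_Integration.integrable_sum integrable_route1)

lemma sum_Max_eq:
  assumes "s \<in> S_lam M k q c l" "x \<in> space M" "k \<ge> 1"
  shows "(\<Sum>i<k. s i x * (q i x - l * c i x)) = Max ((\<lambda>j. q j x - l * c j x) ` {..<k})"
proof -
  let ?Mx = "Max ((\<lambda>j. q j x - l * c j x) ` {..<k})"
  have r: "routing M k s" and z: "\<forall>i<k. q i x - l * c i x < ?Mx \<longrightarrow> s i x = 0"
    using assms unfolding S_lam_def by auto
  have le: "q i x - l * c i x \<le> ?Mx" if "i<k" for i using that by (intro Max_ge) auto
  have "(\<Sum>i<k. s i x * (q i x - l * c i x)) = (\<Sum>i<k. s i x * ?Mx)"
  proof (rule sum.cong)
    fix i assume "i \<in> {..<k}"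
    then have "i < k" by simp
    then show "s i x * (q i x - l * c i x) = s i x * ?Mx"
    proof (cases "q i x - l * c i x < ?Mx")
      case True with z \<open>i<k\<close> show ?thesis by simp
    next
      case False then have "q i x - l * c i x = ?Mx" using le[OF \<open>i<k\<close>] by linarith
      then show ?thesis by simp
    qed
  qed simp
  also have "\<dots> = ?Mx" using r assms(2) unfolding routing_def by (simp add: sum_distrib_right[symmetric])
  finally show ?thesis .
qed

lemma sum_le_Max:
  assumes "routing M k s" "x \<in> space M" "k \<ge> 1"
  shows "(\<Sum>i<k. s i x * (q i x - l * c i x)) \<le> Max ((\<lambda>j. q j x - l * c j x) ` {..<k})"
proof -
  let ?Mx = "Max ((\<lambda>j. q j x - l * c j x) ` {..<k})"
  have le: "q i x - l * c i x \<le> ?Mx" if "i<k" for i using that by (intro Max_ge) auto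
  have "(\<Sum>i<k. s i x * (q i x - l * c i x)) \<le> (\<Sum>i<k. s i x * ?Mx)"
    by (intro sum_mono mult_left_mono) (use le routing_le1[OF assms(1,2)] in auto)
  also have "\<dots> = ?Mx" using assms(1,2) unfolding routing_def by (simp add: sum_distrib_right[symmetric])
  finally show ?thesis .
qed

lemma lagrange:
  assumes "s \<in> S_lam M k q c l" "routing M k s'" "k \<ge> 1"
    "\<forall>i<k. integrable M (q i)" "\<forall>i<k. integrable M (c i)"
  shows "expQ M k q s' - l * expC M k c s' \<le> expQ M k q s - l * expC M k c s"
proof -
  have r: "routing M k s" using assms unfolding S_lam_def by auto
  have iq: "integrable M (\<lambda>x. \<Sum>i<k. t i x * q i x)" if "routing M k t" for t
    using integrable_route[OF that assms(4)] .
  have ic: "integrable M (\<lambda>x. \<Sum>i<k. t i x * c i x)" if "routing M k t" for t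
    using integrable_route[OF that assms(5)] .
  have eq: "expQ M k q t - l * expC M k c t = (\<integral>x. (\<Sum>i<k. t i x * (q i x - l * c i x)) \<partial>M)"
    if "routing M k t" for t
  proof -
    have "expQ M k q t - l * expC M k c t = (\<integral>x. (\<Sum>i<k. t i x * q i x) - l * (\<Sum>i<k. t i x * c i x) \<partial>M)"
      unfolding expQ_def expC_def using iq[OF that] ic[OF that] by simp
    also have "\<dots> = (\<integral>x. (\<Sum>i<k. t i x * (q i x - l * c i x)) \<partial>M)"
      by (simp add: sum_distrib_left sum_subtractf[symmetric] algebra_simps)
    finally show ?thesis .
  qed
  have "(\<integral>x. (\<Sum>i<k. s' i x * (q i x - l * c i x)) \<partial>M) \<le> (\<integral>x. (\<Sum>i<k. s i x * (q i x - l * c i x)) \<partial>M)"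
  proof (rule integral_mono)
    have eqf: "(\<lambda>x. (\<Sum>i<k. t i x * q i x) - l * (\<Sum>i<k. t i x * c i x)) = (\<lambda>x. (\<Sum>i<k. t i x * (q i x - l * c i x)))" for t
      by (simp add: sum_distrib_left sum_subtractf[symmetric] algebra_simps)
    have ii: "integrable M (\<lambda>x. (\<Sum>i<k. t i x * (q i x - l * c i x)))" if "routing M k t" for t
    proof -
      have "integrable M (\<lambda>x. (\<Sum>i<k. t i x * q i x) - l * (\<Sum>i<k. t i x * c i x))"
        using iq[OF that] ic[OF that] by auto
      then show ?thesis unfolding eqf .
    qed
    show "integrable M (\<lambda>x. (\<Sum>i<k. s' i x * (q i x - l * c i x)))" using ii assms(2) .
    show "integrable M (\<lambda>x. (\<Sum>i<k. s i x * (q i x - l * c i x)))" using ii r .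
    fix x assume "x \<in> space M"
    then show "(\<Sum>i<k. s' i x * (q i x - l * c i x)) \<le> (\<Sum>i<k. s i x * (q i x - l * c i x))"
      using sum_Max_eq[OF assms(1) _ assms(3)] sum_le_Max[OF assms(2) _ assms(3)] by simp
  qed
  then show ?thesis using eq r assms(2) by simp
qed


definition sel :: "nat \<Rightarrow> (nat \<Rightarrow> 'a \<Rightarrow> real) \<Rightarrow> (nat \<Rightarrow> 'a \<Rightarrow> real) \<Rightarrow> real \<Rightarrow> 'a \<Rightarrow> nat" where
  "sel k q c l x = (LEAST i. i < k \<and> q i x - l * c i x = Max ((\<lambda>j. q j x - l * c j x) ` {..<k}))"

definition gs :: "nat \<Rightarrow> (nat \<Rightarrow> 'a \<Rightarrow> real) \<Rightarrow> (nat \<Rightarrow> 'a \<Rightarrow> real) \<Rightarrow> real \<Rightarrow> nat \<Rightarrow> 'a \<Rightarrow> real" where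
  "gs k q c l i x = (if i = sel k q c l x then 1 else 0)"

lemma sel_prop:
  assumes "k \<ge> 1"
  shows "sel k q c l x < k \<and> q (sel k q c l x) x - l * c (sel k q c l x) x = Max ((\<lambda>j. q j x - l * c j x) ` {..<k})"
proof -
  have "Max ((\<lambda>j. q j x - l * c j x) ` {..<k}) \<in> (\<lambda>j. q j x - l * c j x) ` {..<k}"
    using assms by (intro Max_in) (auto simp: lessThan_empty_iff)
  then obtain i where "i < k \<and> q i x - l * c i x = Max ((\<lambda>j. q j x - l * c j x) ` {..<k})" by auto
  then show ?thesis unfolding sel_def by (rule LeastI)
qed

lemma Max_ge':
  "i < (k::nat) \<Longrightarrow> q i x - l * c i x \<le> Max ((\<lambda>j. q j x - l * c j x) ` {..<k})"
  by (intro Max_ge finite_imageI) auto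

lemma gs_meas:
  assumes "\<forall>i<k. integrable M (q i)" "\<forall>i<k. integrable M (c i)"
  shows "gs k q c l i \<in> borel_measurable M"
proof -
  have mq: "q i \<in> borel_measurable M" if "i<k" for i using assms that by auto
  have mc: "c i \<in> borel_measurable M" if "i<k" for i using assms that by auto
  have mM: "(\<lambda>x. Max ((\<lambda>j. q j x - l * c j x) ` {..<k})) \<in> borel_measurable M"
    by (rule borel_measurable_Max) (use mq mc in auto)
  have p: "(\<lambda>x. i < k \<and> q i x - l * c i x = Max ((\<lambda>j. q j x - l * c j x) ` {..<k})) \<in> measurable M (count_space UNIV)" for i
  proof (cases "i < k")
    case True
    note [measurable] = mq[OF True] mc[OF True] mM
    show ?thesis using True by measurable
  qed simp
  have "sel k q c l \<in> measurable M (count_space UNIV)"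
    unfolding sel_def by (rule measurable_Least[OF p])
  then show ?thesis unfolding gs_def by measurable
qed

lemma gs_S:
  assumes "k \<ge> 1" "\<forall>i<k. integrable M (q i)" "\<forall>i<k. integrable M (c i)"
  shows "gs k q c l \<in> S_lam M k q c l"
  unfolding S_lam_def routing_def
proof (intro CollectI conjI ballI allI impI)
  fix i assume "i<k" then show "gs k q c l i \<in> borel_measurable M" using gs_meas assms by blast
next
  fix x i show "0 \<le> gs k q c l i x" unfolding gs_def by simp
next
  fix x show "(\<Sum>i<k. gs k q c l i x) = 1" unfolding gs_def using sel_prop[OF assms(1), of q c l x] by simp
next
  fix x i assume "i < k" "q i x - l * c i x < Max ((\<lambda>j. q j x - l * c j x) ` {..<k})"
  then show "gs k q c l i x = 0" unfolding gs_def using sel_prop[OF assms(1), of q c l x] by auto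
qed

lemma sum_gs: "k \<ge> 1 \<Longrightarrow> (\<Sum>i<k. gs k q c l i x * f i x) = f (sel k q c l x) x"
proof -
  assume "k \<ge> 1"
  have "(\<Sum>i<k. gs k q c l i x * f i x) = (\<Sum>i<k. if i = sel k q c l x then f i x else 0)"
    unfolding gs_def by (intro sum.cong) auto
  also have "\<dots> = f (sel k q c l x) x" using sel_prop[OF \<open>k \<ge> 1\<close>, of q c l x] by (simp add: sum.delta')
  finally show ?thesis .
qed

lemma crossing:
  fixes a d m l :: real
  assumes "a - m * d > 0" "a - l * d < 0"
  shows "min m l < a / d \<and> a / d < max m l"
proof (cases "d > 0")
  case True
  then have "m < a / d" "a / d < l" using assms by (simp_all add: field_simps)
  then show ?thesis by simp
next
  case False
  then have "d < 0 \<or> d = 0" by linarith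
  then show ?thesis
  proof
    assume "d < 0"
    then have "a / d < m" "l < a / d" using assms by (simp_all add: field_simps)
    then show ?thesis by simp
  next
    assume "d = 0" then show ?thesis using assms by simp
  qed
qed

lemma persist:
  assumes "k \<ge> 1" "x \<in> space M" "\<forall>\<mu>. a < \<mu> \<and> \<mu> < b \<longrightarrow> \<mu> \<notin> Lam M k q c"
    "a < m" "m < b" "a \<le> l" "l \<le> b"
  shows "q (sel k q c m x) x - l * c (sel k q c m x) x = Max ((\<lambda>j. q j x - l * c j x) ` {..<k})"
proof -
  let ?i = "sel k q c m x"
  have si0: "?i < k \<and> q ?i x - m * c ?i x = Max ((\<lambda>j. q j x - m * c j x) ` {..<k})"
    using sel_prop[OF assms(1), of q c m x] .
  note si = conjunct1[OF si0] conjunct2[OF si0]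
  have mnot: "m \<notin> Lam M k q c" using assms by auto
  have "q j x - l * c j x \<le> q ?i x - l * c ?i x" if "j < k" for j
  proof (cases "j = ?i")
    case False
    have "q j x - m * c j x \<le> q ?i x - m * c ?i x" using Max_ge'[OF that] si by simp
    moreover have "q j x - m * c j x \<noteq> q ?i x - m * c ?i x"
      using mnot False that si(1) assms(2) unfolding Lam_def by force
    ultimately have gt: "(q ?i x - q j x) - m * (c ?i x - c j x) > 0" by (simp add: algebra_simps)
    show ?thesis
    proof (rule ccontr)
      assume "\<not> ?thesis"
      then have lt: "(q ?i x - q j x) - l * (c ?i x - c j x) < 0" by (simp add: algebra_simps)
      define mu where "mu = (q ?i x - q j x) / (c ?i x - c j x)"
      have d: "c ?i x - c j x \<noteq> 0" using gt lt by auto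
      from crossing[OF gt lt] have "min m l < mu \<and> mu < max m l" unfolding mu_def .
      then have "a < mu \<and> mu < b" using assms by auto
      moreover have "q ?i x - mu * c ?i x = q j x - mu * c j x"
        using d unfolding mu_def by (simp add: field_simps)
      then have "mu \<in> Lam M k q c" unfolding Lam_def using assms(2) si(1) that False by force
      ultimately show False using assms(3) by auto
    qed
  qed simp
  then show ?thesis using si(1) by (intro antisym Max_ge' Max.boundedI) auto
qed

lemma gs_in_S:
  assumes "k \<ge> 1" "\<forall>i<k. integrable M (q i)" "\<forall>i<k. integrable M (c i)"
    "\<forall>\<mu>. a < \<mu> \<and> \<mu> < b \<longrightarrow> \<mu> \<notin> Lam M k q c"
    "a < m" "m < b" "a \<le> l" "l \<le> b"
  shows "gs k q c m \<in> S_lam M k q c l"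
proof -
  have "routing M k (gs k q c m)" using gs_S[OF assms(1-3)] unfolding S_lam_def by auto
  moreover have "gs k q c m i x = 0" if "x \<in> space M" "i<k" "q i x - l * c i x < Max ((\<lambda>j. q j x - l * c j x) ` {..<k})" for x i
    using persist[OF assms(1) that(1) assms(4-8)] that(3) unfolding gs_def by auto
  ultimately show ?thesis unfolding S_lam_def by auto
qed

lemma large:
  assumes "k \<ge> 1" "x \<in> space M" "\<forall>\<mu>. a < \<mu> \<longrightarrow> \<mu> \<notin> Lam M k q c" "a < m" "j < k"
  shows "c (sel k q c m x) x \<le> c j x"
proof (rule ccontr)
  let ?i = "sel k q c m x"
  have si0: "?i < k \<and> q ?i x - m * c ?i x = Max ((\<lambda>j. q j x - m * c j x) ` {..<k})"
    using sel_prop[OF assms(1), of q c m x] .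
  note si = conjunct1[OF si0] conjunct2[OF si0]
  assume "\<not> ?thesis"
  then have d: "c ?i x - c j x > 0" by simp
  have "q j x - m * c j x \<le> q ?i x - m * c ?i x" using Max_ge'[OF assms(5)] si by simp
  then have ge: "(q ?i x - q j x) - m * (c ?i x - c j x) \<ge> 0" by (simp add: algebra_simps)
  define mu where "mu = (q ?i x - q j x) / (c ?i x - c j x)"
  have "m \<le> mu" unfolding mu_def using d ge by (simp add: field_simps)
  moreover have "q ?i x - mu * c ?i x = q j x - mu * c j x"
    using d unfolding mu_def by (simp add: field_simps)
  then have "mu \<in> Lam M k q c" unfolding Lam_def using assms(2,5) si(1) d by force
  ultimately show False using assms(3,4) by auto
qed

lemma conv_S:
  assumes "s1 \<in> S_lam M k q c l" "s2 \<in> S_lam M k q c l" "0 \<le> t" "t \<le> 1"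
  shows "(\<lambda>i x. t * s1 i x + (1 - t) * s2 i x) \<in> S_lam M k q c l"
proof -
  have r1: "routing M k s1" and r2: "routing M k s2" using assms unfolding S_lam_def by auto
  have "routing M k (\<lambda>i x. t * s1 i x + (1 - t) * s2 i x)"
    unfolding routing_def
  proof (intro conjI allI impI ballI)
    fix i assume "i < k"
    then have [measurable]: "s1 i \<in> borel_measurable M" "s2 i \<in> borel_measurable M"
      using r1 r2 unfolding routing_def by auto
    show "(\<lambda>x. t * s1 i x + (1 - t) * s2 i x) \<in> borel_measurable M" by measurable
  next
    fix x i assume "x \<in> space M" "i < k"
    then show "0 \<le> t * s1 i x + (1 - t) * s2 i x"
      using routing_le1[OF r1] routing_le1[OF r2] assms(3,4) by auto
  next
    fix x assume "x \<in> space M"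
    then show "(\<Sum>i<k. t * s1 i x + (1 - t) * s2 i x) = 1"
      using r1 r2 unfolding routing_def by (simp add: sum.distrib sum_distrib_left[symmetric])
  qed
  then show ?thesis using assms(1,2) unfolding S_lam_def by auto
qed

lemma conv_C:
  assumes "routing M k s1" "routing M k s2" "\<forall>i<k. integrable M (c i)"
  shows "expC M k c (\<lambda>i x. t * s1 i x + (1 - t) * s2 i x) = t * expC M k c s1 + (1 - t) * expC M k c s2"
proof -
  have "expC M k c (\<lambda>i x. t * s1 i x + (1 - t) * s2 i x) =
     (\<integral>x. t * (\<Sum>i<k. s1 i x * c i x) + (1 - t) * (\<Sum>i<k. s2 i x * c i x) \<partial>M)"
    unfolding expC_def
    by (intro Bochner_Integration.integral_cong refl)
      (unfold sum_distrib_left sum.distrib[symmetric], intro sum.cong refl, simp add: algebra_simps)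
  also have "\<dots> = t * expC M k c s1 + (1 - t) * expC M k c s2"
    unfolding expC_def using integrable_route[OF assms(1,3)] integrable_route[OF assms(2,3)] by simp
  finally show ?thesis .
qed


theorem theorem4:
  fixes M :: "'a measure" and k :: nat and q c :: "nat \<Rightarrow> 'a \<Rightarrow> real" and B :: real
  assumes "prob_space M"
    and "k \<ge> 1"
    and "\<forall>i<k. integrable M (q i)"
    and "\<forall>i<k. integrable M (c i)"
    and "\<exists>s. routing M k s \<and> expC M k c s \<le> B"
    and "finite (Lam M k q c)"
  shows "(\<forall>s\<in>S_lam M k q c 0. expC M k c s \<le> B \<longrightarrow>
            (\<forall>s'. routing M k s' \<and> expC M k c s' \<le> B \<longrightarrow> expQ M k q s' \<le> expQ M k q s))
       \<and> (\<not> (\<exists>s\<in>S_lam M k q c 0. expC M k c s \<le> B) \<longrightarrow>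
            (\<exists>l\<ge>0. \<exists>s\<in>S_lam M k q c l. expC M k c s = B)
          \<and> (\<forall>s. (\<exists>l\<ge>0. s \<in> S_lam M k q c l) \<and> expC M k c s = B \<longrightarrow>
               (\<forall>s'. routing M k s' \<and> expC M k c s' \<le> B \<longrightarrow> expQ M k q s' \<le> expQ M k q s)))"
proof -
  have opt: "expQ M k q s' \<le> expQ M k q s"
    if "s \<in> S_lam M k q c l" "l \<ge> 0" "expC M k c s = B \<or> l = 0" "routing M k s'" "expC M k c s' \<le> B" for s s' l
  proof -
    have "expQ M k q s' - l * expC M k c s' \<le> expQ M k q s - l * expC M k c s"
      using lagrange[OF that(1) that(4) assms(2-4)] .
    moreover have "l * expC M k c s' \<le> l * expC M k c s" if "expC M k c s = B"
      using that \<open>l \<ge> 0\<close> \<open>expC M k c s' \<le> B\<close> by (simp add: mult_left_mono)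
    ultimately show ?thesis using that(3) by auto
  qed
  have ex: "\<exists>l\<ge>0. \<exists>s\<in>S_lam M k q c l. expC M k c s = B"
    if nS0: "\<not> (\<exists>s\<in>S_lam M k q c 0. expC M k c s \<le> B)"
  proof -
    define P where "P = {\<mu> \<in> Lam M k q c. \<mu> > 0}"
    define A where "A = {\<mu> \<in> insert 0 P. \<exists>s\<in>S_lam M k q c \<mu>. expC M k c s \<ge> B}"
    have fP: "finite P" unfolding P_def using assms(6) by auto
    have fA: "finite A" unfolding A_def using fP by auto
    have "gs k q c 0 \<in> S_lam M k q c 0" using gs_S[OF assms(2-4)] .
    then have A0: "0 \<in> A" unfolding A_def using nS0 by force
    define a where "a = Max A"
    have aA: "a \<in> A" unfolding a_def using fA A0 by (intro Max_in) auto
    have a0: "a \<ge> 0" using aA unfolding A_def P_def by auto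
    have amax: "\<mu> \<le> a" if "\<mu> \<in> A" for \<mu> unfolding a_def using fA that by auto
    obtain s1 where s1: "s1 \<in> S_lam M k q c a" "expC M k c s1 \<ge> B" using aA unfolding A_def by auto
    obtain s2 where s2: "s2 \<in> S_lam M k q c a" "expC M k c s2 \<le> B"
    proof (cases "\<exists>p\<in>P. p > a")
      case True
      define b where "b = Min {p\<in>P. p > a}"
      have bP: "b \<in> {p\<in>P. p > a}" unfolding b_def using True fP by (intro Min_in) auto
      have bmin: "b \<le> p" if "p \<in> P" "p > a" for p unfolding b_def using fP that by auto
      have gap: "\<forall>\<mu>. a < \<mu> \<and> \<mu> < b \<longrightarrow> \<mu> \<notin> Lam M k q c"
      proof (intro allI impI)
        fix \<mu> assume h: "a < \<mu> \<and> \<mu> < b"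
        show "\<mu> \<notin> Lam M k q c"
        proof
          assume "\<mu> \<in> Lam M k q c"
          then have "\<mu> \<in> P" unfolding P_def using h a0 by auto
          then show False using bmin h by force
        qed
      qed
      have ab: "a < b" using bP by auto
      define m where "m = (a + b) / 2"
      have m: "a < m" "m < b" unfolding m_def using ab by auto
      have g1: "gs k q c m \<in> S_lam M k q c a"
        by (rule gs_in_S[OF assms(2-4) gap m]) (use ab in auto)
      have g2: "gs k q c m \<in> S_lam M k q c b"
        by (rule gs_in_S[OF assms(2-4) gap m]) (use ab in auto)
      have "b \<notin> A" using amax ab by force
      then have "expC M k c (gs k q c m) < B" using g2 bP unfolding A_def by force
      then show ?thesis using g1 that by auto
    next
      case False
      have gap: "\<forall>\<mu>. a < \<mu> \<longrightarrow> \<mu> \<notin> Lam M k q c"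
      proof (intro allI impI)
        fix \<mu> assume h: "a < \<mu>"
        show "\<mu> \<notin> Lam M k q c"
        proof
          assume "\<mu> \<in> Lam M k q c"
          then have "\<mu> \<in> P" unfolding P_def using h a0 by auto
          then show False using False h by force
        qed
      qed
      define m where "m = a + 1"
      have g1: "gs k q c m \<in> S_lam M k q c a"
        by (rule gs_in_S[OF assms(2-4), of a "a + 2"]) (use gap in \<open>auto simp: m_def\<close>)
      obtain s0 where s0: "routing M k s0" "expC M k c s0 \<le> B" using assms(5) by auto
      have rg: "routing M k (gs k q c m)" using g1 unfolding S_lam_def by auto
      have "expC M k c (gs k q c m) \<le> expC M k c s0"
        unfolding expC_def
      proof (rule integral_mono)
        show "integrable M (\<lambda>x. \<Sum>i<k. gs k q c m i x * c i x)" using integrable_route[OF rg assms(4)] .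
        show "integrable M (\<lambda>x. \<Sum>i<k. s0 i x * c i x)" using integrable_route[OF s0(1) assms(4)] .
        fix x assume x: "x \<in> space M"
        have "(\<Sum>i<k. gs k q c m i x * c i x) = c (sel k q c m x) x" using sum_gs[OF assms(2)] .
        also have "\<dots> = (\<Sum>i<k. s0 i x * c (sel k q c m x) x)"
          using s0(1) x unfolding routing_def by (simp add: sum_distrib_right[symmetric])
        also have "\<dots> \<le> (\<Sum>i<k. s0 i x * c i x)"
          by (intro sum_mono mult_left_mono large[OF assms(2) x gap]) (use routing_le1[OF s0(1) x] m_def in auto)
        finally show "(\<Sum>i<k. gs k q c m i x * c i x) \<le> (\<Sum>i<k. s0 i x * c i x)" .
      qed
      then show ?thesis using g1 s0 that by auto
    qed
    have r1: "routing M k s1" and r2: "routing M k s2" using s1 s2 unfolding S_lam_def by auto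
    show ?thesis
    proof (cases "expC M k c s1 = expC M k c s2")
      case True
      then show ?thesis using s1 s2 a0 by force
    next
      case False
      define t where "t = (B - expC M k c s2) / (expC M k c s1 - expC M k c s2)"
      have gt: "expC M k c s1 - expC M k c s2 > 0" using False s1 s2 by auto
      have t: "0 \<le> t" "t \<le> 1" unfolding t_def using gt s1 s2 by (auto simp: field_simps)
      have "expC M k c (\<lambda>i x. t * s1 i x + (1 - t) * s2 i x) = B"
      proof -
        have e: "t * (expC M k c s1 - expC M k c s2) = B - expC M k c s2" unfolding t_def using gt by simp
        have "t * expC M k c s1 + (1 - t) * expC M k c s2 = expC M k c s2 + t * (expC M k c s1 - expC M k c s2)"
          by (simp add: algebra_simps)
        then show ?thesis unfolding conv_C[OF r1 r2 assms(4)] using e by simp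
      qed
      then show ?thesis using conv_S[OF s1(1) s2(1) t] a0 by blast
    qed
  qed
  show ?thesis
    using opt ex by blast
qed

end
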